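(* Let $(X,d)$ be a metric space, $k\in\mathbb{N}\setminus\{1\}$ and $\epsilon>0$. Let $L_1,\dots,L_k$ be subsets of $X$ such that for each $i$, $|L_i|=k$ and $d(x,y)>2\epsilon$ for all distinct $x,y\in L_i$. Then there exist $x_i\in L_i$, $i=1,\dots,k$, such that $d(x_i,x_{i'})>\epsilon$ for all $1\le i<i'\le k$. *)

theory Defs
  imports "HOL-Analysis.Analysis"
begin

end

theory Submission
  imports Defs
begin

lemma step_aux:
  fixes L :: "nat \<Rightarrow> 'a::metric_space set" and k :: nat and \<epsilon> :: real
  assumes "\<And>i. i \<in> {1..k} \<Longrightarrow> finite (L i) \<and> card (L i) = k"
    and "\<And>i x y. i \<in> {1..k} \<Longrightarrow> x \<in> L i \<Longrightarrow> y \<in> L i \<Longrightarrow> x \<noteq> y \<Longrightarrow> dist x y > 2 * \<epsilon>"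
  shows "m \<le> k \<Longrightarrow> \<exists>x :: nat \<Rightarrow> 'a. (\<forall>i\<in>{1..m}. x i \<in> L i) \<and>
           (\<forall>i i'. 1 \<le> i \<and> i < i' \<and> i' \<le> m \<longrightarrow> dist (x i) (x i') > \<epsilon>)"
proof (induction m)
  case 0
  then show ?case by auto
next
  case (Suc m)
  then obtain x where x1: "\<forall>i\<in>{1..m}. x i \<in> L i"
    and x2: "\<forall>i i'. 1 \<le> i \<and> i < i' \<and> i' \<le> m \<longrightarrow> dist (x i) (x i') > \<epsilon>" by auto
  let ?L = "L (Suc m)"
  have mk: "Suc m \<in> {1..k}" using Suc.prems by auto
  have fin: "finite ?L" and cd: "card ?L = k" using assms(1)[OF mk] by auto
  define B where "B = {y \<in> ?L. \<exists>i\<in>{1..m}. dist (x i) y \<le> \<epsilon>}"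
  define f where "f i = (SOME y. y \<in> ?L \<and> dist (x i) y \<le> \<epsilon>)" for i
  have "B \<subseteq> f ` {1..m}"
  proof
    fix y assume "y \<in> B"
    then obtain i where i: "i \<in> {1..m}" "y \<in> ?L" "dist (x i) y \<le> \<epsilon>" unfolding B_def by auto
    have fi: "f i \<in> ?L \<and> dist (x i) (f i) \<le> \<epsilon>" unfolding f_def by (rule someI[of "\<lambda>z. z \<in> ?L \<and> dist (x i) z \<le> \<epsilon>" y]) (use i in auto)
    have "dist (f i) y \<le> dist (x i) (f i) + dist (x i) y" by (rule dist_triangle3)
    also have "\<dots> \<le> 2 * \<epsilon>" using fi i by auto
    finally have "\<not> dist (f i) y > 2 * \<epsilon>" by simp
    then have "f i = y" using assms(2)[OF mk, of "f i" y] fi i by blast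
    then show "y \<in> f ` {1..m}" using i by auto
  qed
  then have "card B \<le> card (f ` {1..m})" by (intro card_mono) auto
  also have "\<dots> \<le> card {1..m}" by (rule card_image_le) auto
  finally have "card B \<le> m" by simp
  then have lt: "card B < card ?L" using cd Suc.prems by auto
  have "?L - B \<noteq> {}"
  proof
    assume "?L - B = {}"
    then have "?L \<subseteq> B" by blast
    moreover have "finite B" unfolding B_def using fin by auto
    ultimately have "card ?L \<le> card B" by (rule card_mono[rotated])
    then show False using lt by simp
  qed
  then obtain y where y: "y \<in> ?L" "y \<notin> B" by auto
  define x' where "x' = x(Suc m := y)"
  have "\<forall>i\<in>{1..Suc m}. x' i \<in> L i" using x1 y unfolding x'_def by (auto simp: le_Suc_eq)
  moreover have "\<forall>i i'. 1 \<le> i \<and> i < i' \<and> i' \<le> Suc m \<longrightarrow> dist (x' i) (x' i') > \<epsilon>"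
  proof (intro allI impI)
    fix i i' assume h: "1 \<le> i \<and> i < i' \<and> i' \<le> Suc m"
    show "dist (x' i) (x' i') > \<epsilon>"
    proof (cases "i' = Suc m")
      case True
      then have "i \<in> {1..m}" using h by auto
      then have "dist (x i) y > \<epsilon>" using y unfolding B_def by (auto simp: not_le)
      then show ?thesis using True h unfolding x'_def by auto
    next
      case False
      then show ?thesis using x2 h unfolding x'_def by auto
    qed
  qed
  ultimately show ?case by blast
qed

theorem lemma4p1:
  fixes L :: "nat \<Rightarrow> 'a::metric_space set" and k :: nat and \<epsilon> :: real
  assumes "k \<noteq> 1" and "\<epsilon> > 0"
    and "\<And>i. i \<in> {1..k} \<Longrightarrow> finite (L i) \<and> card (L i) = k"
    and "\<And>i x y. i \<in> {1..k} \<Longrightarrow> x \<in> L i \<Longrightarrow> y \<in> L i \<Longrightarrow> x \<noteq> y \<Longrightarrow> dist x y > 2 * \<epsilon>"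
  shows "\<exists>x :: nat \<Rightarrow> 'a. (\<forall>i\<in>{1..k}. x i \<in> L i) \<and>
           (\<forall>i i'. 1 \<le> i \<and> i < i' \<and> i' \<le> k \<longrightarrow> dist (x i) (x i') > \<epsilon>)"
  using step_aux[of k L \<epsilon> k] assms by blast

end
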